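(* Let $s$ and $K$ be probability densities with respect to Lebesgue measure on $\mathbb{R}$, $w>0$, $K_w(y)=w^{-1}K(w^{-1}y)$ and $(K^2)_w(y)=w^{-1}K^2(w^{-1}y)$. Let $X_1,\dots,X_n$ be i.i.d. with density $s$, $P_n=n^{-1}\sum_{i=1}^n\delta_{X_i}$, so that $(K_w\ast P_n)(x)=n^{-1}\sum_{i=1}^nK_w(x-X_i)$, and let $A_w=\{x\in\mathbb{R}:(K_w\ast s)(x)>0\}$. Then: (i) \[ \mathbb{E}_s\left[\left\|\sqrt{K_w\ast P_n}-\sqrt{K_w\ast s}\right\|^2\right]\le\frac{1}{nw}\int_{A_w}\frac{((K^2)_w\ast s)(x)}{(K_w\ast s)(x)}\,dx. \] (ii) If $s$ is supported on an interval of finite length $2L$, then \[ \mathbb{E}_s\left[\left\|\sqrt{K_w\ast P_n}-\sqrt{K_w\ast s}\right\|^2\right]\le\frac{1}{nw}\int\sup_{-L\le z\le L}K\left(\frac{x-z}{w}\right)dx. \] (iii) If $K$ is bounded, nondecreasing on $(-\infty,M_1)$ and nonincreasing on $(M_2,+\infty)$ with $M_1\le M_2$, then \[ \int\sup_{-L\le z\le L}K\left(\frac{x-z}{w}\right)dx\le2L\|K\|_\infty+w\left[(M_2-M_1)\|K\|_\infty+\int_{-\infty}^{M_1}K(x)\,dx+\int_{M_2}^{\infty}K(x)\,dx\right]. \] (iv) In particular, if $s$ is supported on an interval of length $2L$ and $K$ is bounded and unimodal, then \[ \mathbb{E}_s\left[\left\|\sqrt{K_w\ast P_n}-\sqrt{K_w\ast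 s}\right\|^2\right]\le\frac{2L\|K\|_\infty}{nw}+\frac1n. \]
   Context: $\|\cdot\|$ is the $\mathbb{L}_2$-norm with respect to Lebesgue measure and $\ast$ denotes convolution; $\mathbb{E}_s$ is expectation when the $X_i$ have density $s$. *)

theory Defs
  imports "HOL-Probability.Probability"
begin

definition is_density :: "(real \<Rightarrow> real) \<Rightarrow> bool" where
  "is_density f \<longleftrightarrow> f \<in> borel_measurable borel \<and> (\<forall>x. 0 \<le> f x)
     \<and> (\<integral>\<^sup>+ x. ennreal (f x) \<partial>lborel) = 1"

definition scaled :: "(real \<Rightarrow> real) \<Rightarrow> real \<Rightarrow> real \<Rightarrow> real" where
  "scaled K w y = K (y / w) / w"

definition conv :: "(real \<Rightarrow> real) \<Rightarrow> (real \<Rightarrow> real) \<Rightarrow> real \<Rightarrow> ennreal" where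
  "conv f g x = (\<integral>\<^sup>+ y. ennreal (f (x - y) * g y) \<partial>lborel)"

definition emp_conv :: "(real \<Rightarrow> real) \<Rightarrow> real \<Rightarrow> nat \<Rightarrow> (nat \<Rightarrow> real) \<Rightarrow> real \<Rightarrow> real" where
  "emp_conv K w n X x = (\<Sum>i<n. scaled K w (x - X i)) / real n"

definition sample :: "nat \<Rightarrow> (real \<Rightarrow> real) \<Rightarrow> (nat \<Rightarrow> real) measure" where
  "sample n s = PiM {..<n} (\<lambda>_. density lborel (\<lambda>x. ennreal (s x)))"

definition risk :: "(real \<Rightarrow> real) \<Rightarrow> (real \<Rightarrow> real) \<Rightarrow> real \<Rightarrow> nat \<Rightarrow> ennreal" where
  "risk s K w n = (\<integral>\<^sup>+ X. (\<integral>\<^sup>+ x. ennreal ((sqrt (emp_conv K w n X x)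
        - sqrt (enn2real (conv (scaled K w) s x)))\<^sup>2) \<partial>lborel) \<partial>sample n s)"

definition A_set :: "(real \<Rightarrow> real) \<Rightarrow> (real \<Rightarrow> real) \<Rightarrow> real \<Rightarrow> real set" where
  "A_set s K w = {x. conv (scaled K w) s x > 0}"

definition supnorm :: "(real \<Rightarrow> real) \<Rightarrow> real" where
  "supnorm K = (SUP x. \<bar>K x\<bar>)"

end

theory Submission
  imports Defs
begin

lemma K_le_supnorm:
  assumes "bdd_above (range K)" "\<And>x. 0 \<le> K x"
  shows "K x \<le> supnorm K"
proof -
  have "range (\<lambda>x. \<bar>K x\<bar>) = range K" using assms(2) by (simp add: abs_of_nonneg)
  then have "bdd_above (range (\<lambda>x. \<bar>K x\<bar>))" using assms(1) by simp
  then have "\<bar>K x\<bar> \<le> supnorm K" unfolding supnorm_def by (rule cSUP_upper[OF UNIV_I])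
  then show ?thesis by simp
qed

lemma part3:
  fixes K :: "real \<Rightarrow> real" and w L M1 M2 :: real
  assumes Km[measurable]: "K \<in> borel_measurable borel" and K0: "\<And>x. 0 \<le> K x" and w: "0 < w"
    and L: "0 \<le> L" and M: "M1 \<le> M2" and bdd: "bdd_above (range K)"
    and mono1: "mono_on {..<M1} K" and mono2: "monotone_on {M2<..} (\<le>) (\<ge>) K"
  shows "(\<integral>\<^sup>+ x. (SUP z\<in>{-L..L}. ennreal (K ((x - z) / w))) \<partial>lborel)
          \<le> ennreal (2 * L * supnorm K + w * ((M2 - M1) * supnorm K))
             + ennreal w * ((\<integral>\<^sup>+ x. indicator {..M1} x * ennreal (K x) \<partial>lborel)
                          + (\<integral>\<^sup>+ x. indicator {M2..} x * ennreal (K x) \<partial>lborel))"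
proof -
  define B where "B = supnorm K"
  have KB: "K x \<le> B" for x unfolding B_def using K_le_supnorm[OF bdd K0] .
  have B0: "0 \<le> B" using K0[of 0] KB[of 0] by simp
  define h1 where "h1 x = indicator {..<w*M1-L} x * ennreal (K ((x+L)/w))" for x
  define h2 where "h2 x = indicator {w*M2+L<..} x * ennreal (K ((x-L)/w))" for x
  define h3 where "h3 x = ennreal B * indicator {w*M1-L..w*M2+L} x" for x
  have [measurable]: "h1 \<in> borel_measurable borel" "h2 \<in> borel_measurable borel" "h3 \<in> borel_measurable borel"
    unfolding h1_def h2_def h3_def by measurable
  have pw: "(SUP z\<in>{-L..L}. ennreal (K ((x - z) / w))) \<le> h1 x + h2 x + h3 x" for x
  proof (rule SUP_least)
    fix z assume z: "z \<in> {-L..L}"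
    define u where "u = (x - z) / w"
    have u1: "(x - L) / w \<le> u" "u \<le> (x + L) / w"
      using z w unfolding u_def by (auto simp: divide_right_mono)
    show "ennreal (K ((x - z) / w)) \<le> h1 x + h2 x + h3 x"
    proof (cases "x < w*M1 - L")
      case True
      then have "(x+L)/w < M1" using w by (simp add: divide_less_eq mult.commute)
      then have "K u \<le> K ((x+L)/w)" using mono1 u1 by (intro mono_onD[OF mono1]) auto
      then have "ennreal (K ((x - z) / w)) \<le> h1 x" unfolding h1_def u_def using True by (simp add: ennreal_leI)
      then show ?thesis by (metis add.commute add_increasing2 zero_le)
    next
      case F1: False
      show ?thesis
      proof (cases "x > w*M2 + L")
        case True
        then have "(x-L)/w > M2" using w by (simp add: less_divide_eq mult.commute)
        then have "K u \<le> K ((x-L)/w)" using mono2 u1 by (intro monotone_onD[OF mono2]) auto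
        then have "ennreal (K ((x - z) / w)) \<le> h2 x" unfolding h2_def u_def using True by (simp add: ennreal_leI)
        then show ?thesis by (metis add.commute add_increasing2 zero_le add_increasing)
      next
        case False
        then have "ennreal (K ((x - z) / w)) \<le> h3 x" unfolding h3_def using F1 KB by (simp add: ennreal_leI)
        then show ?thesis by (metis add_increasing zero_le)
      qed
    qed
  qed
  have "(\<integral>\<^sup>+ x. (SUP z\<in>{-L..L}. ennreal (K ((x - z) / w))) \<partial>lborel) \<le> (\<integral>\<^sup>+ x. h1 x + h2 x + h3 x \<partial>lborel)"
    by (intro nn_integral_mono pw)
  also have "\<dots> = (\<integral>\<^sup>+ x. h1 x \<partial>lborel) + (\<integral>\<^sup>+ x. h2 x \<partial>lborel) + (\<integral>\<^sup>+ x. h3 x \<partial>lborel)"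
    by (simp add: nn_integral_add)
  also have "(\<integral>\<^sup>+ x. h3 x \<partial>lborel) = ennreal (2 * L * B + w * ((M2 - M1) * B))"
  proof -
    have "w*M1 - L \<le> w*M2 + L" using w M L by (smt (verit) mult_left_mono)
    then have "(\<integral>\<^sup>+ x. h3 x \<partial>lborel) = ennreal B * ennreal (w*M2 + L - (w*M1 - L))"
      unfolding h3_def by (simp add: nn_integral_cmult_indicator)
    also have "\<dots> = ennreal (2 * L * B + w * ((M2 - M1) * B))"
      using B0 \<open>w*M1 - L \<le> w*M2 + L\<close> by (simp add: ennreal_mult'[symmetric] algebra_simps)
    finally show ?thesis .
  qed
  also have "(\<integral>\<^sup>+ x. h1 x \<partial>lborel) \<le> ennreal w * (\<integral>\<^sup>+ x. indicator {..M1} x * ennreal (K x) \<partial>lborel)"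
  proof -
    have "(\<integral>\<^sup>+ x. h1 x \<partial>lborel) = ennreal \<bar>w\<bar> * (\<integral>\<^sup>+ x. h1 (-L + w * x) \<partial>lborel)"
      using w by (intro nn_integral_real_affine) auto
    also have "(\<integral>\<^sup>+ x. h1 (-L + w * x) \<partial>lborel) \<le> (\<integral>\<^sup>+ x. indicator {..M1} x * ennreal (K x) \<partial>lborel)"
      using w by (intro nn_integral_mono) (auto simp: h1_def indicator_def)
    finally show ?thesis using w by (simp add: mult_left_mono)
  qed
  also have "(\<integral>\<^sup>+ x. h2 x \<partial>lborel) \<le> ennreal w * (\<integral>\<^sup>+ x. indicator {M2..} x * ennreal (K x) \<partial>lborel)"
  proof -
    have "(\<integral>\<^sup>+ x. h2 x \<partial>lborel) = ennreal \<bar>w\<bar> * (\<integral>\<^sup>+ x. h2 (L + w * x) \<partial>lborel)"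
      using w by (intro nn_integral_real_affine) auto
    also have "(\<integral>\<^sup>+ x. h2 (L + w * x) \<partial>lborel) \<le> (\<integral>\<^sup>+ x. indicator {M2..} x * ennreal (K x) \<partial>lborel)"
      using w by (intro nn_integral_mono) (auto simp: h2_def indicator_def)
    finally show ?thesis using w by (simp add: mult_left_mono)
  qed
  finally show ?thesis unfolding B_def by (simp add: algebra_simps add_mono distrib_left)
qed


lemma sqrt_diff_sq_le:
  fixes a b :: real assumes a: "0 \<le> a" and b: "0 < b"
  shows "(sqrt a - sqrt b)\<^sup>2 \<le> (a - b)\<^sup>2 / b"
proof -
  have ab: "a - b = (sqrt a - sqrt b) * (sqrt a + sqrt b)"
    using a b by (simp add: algebra_simps)
  have "b \<le> (sqrt a + sqrt b)\<^sup>2"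
    using a b by (simp add: power2_eq_square algebra_simps)
  then have "(sqrt a - sqrt b)\<^sup>2 * b \<le> (sqrt a - sqrt b)\<^sup>2 * (sqrt a + sqrt b)\<^sup>2"
    by (intro mult_left_mono) auto
  also have "\<dots> = (a - b)\<^sup>2" unfolding ab by (simp add: power_mult_distrib)
  finally show ?thesis using b by (simp add: le_divide_eq)
qed

lemma abs_le_1_sq: "\<bar>y\<bar> \<le> 1 + (y::real)\<^sup>2"
proof (cases "\<bar>y\<bar> \<le> 1")
  case False
  then have "\<bar>y\<bar> * 1 \<le> \<bar>y\<bar> * \<bar>y\<bar>" by (intro mult_left_mono) auto
  then show ?thesis by (simp add: power2_eq_square)
qed (smt (verit) zero_le_power2)

lemma var_bound:
  fixes \<mu> :: "real measure" and Y :: "real \<Rightarrow> real" and n :: nat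
  assumes P: "prob_space \<mu>" and Ym[measurable]: "Y \<in> borel_measurable \<mu>"
    and Y2: "(\<integral>\<^sup>+t. ennreal ((Y t)\<^sup>2) \<partial>\<mu>) < \<infinity>" and n: "1 \<le> n"
  shows "(\<integral>\<^sup>+X. ennreal (((\<Sum>i<n. Y (X i)) / real n - (\<integral>t. Y t \<partial>\<mu>))\<^sup>2) \<partial>PiM {..<n} (\<lambda>_. \<mu>))
     \<le> ennreal (1 / real n) * (\<integral>\<^sup>+t. ennreal ((Y t)\<^sup>2) \<partial>\<mu>)"
proof -
  interpret prob_space \<mu> by fact
  interpret PP: product_prob_space "\<lambda>_. \<mu>" "{..<n}"
    by (simp add: product_prob_space_def product_prob_space_axioms_def product_sigma_finite_def P prob_space_imp_sigma_finite)
  define b where "b = (\<integral>t. Y t \<partial>\<mu>)"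
  define Z where "Z t = Y t - b" for t
  have iY2: "integrable \<mu> (\<lambda>t. (Y t)\<^sup>2)"
    using Y2 by (intro integrableI_bounded) auto
  have iY: "integrable \<mu> Y"
    by (rule Bochner_Integration.integrable_bound[where f="\<lambda>t. 1 + (Y t)\<^sup>2"])
       (use iY2 abs_le_1_sq in auto)
  have iZ: "integrable \<mu> Z" unfolding Z_def using iY by auto
  have Zsq: "(Z t)\<^sup>2 = (Y t)\<^sup>2 - 2 * b * Y t + b\<^sup>2" for t unfolding Z_def by (simp add: power2_eq_square algebra_simps)
  have iZ2: "integrable \<mu> (\<lambda>t. (Z t)\<^sup>2)" unfolding Zsq using iY iY2 by auto
  have intZ: "(\<integral>t. Z t \<partial>\<mu>) = 0" unfolding Z_def b_def using iY by (simp add: prob_space)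
  have intZ2: "(\<integral>t. (Z t)\<^sup>2 \<partial>\<mu>) = (\<integral>t. (Y t)\<^sup>2 \<partial>\<mu>) - b\<^sup>2"
    unfolding Zsq using iY iY2 by (simp add: prob_space b_def power2_eq_square)
  define f where "f i j k = (\<lambda>t. (if k = i then Z t else 1) * (if k = j then Z t else 1))" for i j k :: nat
  have prodf: "(\<Prod>k\<in>{..<n}. f i j k (X k)) = Z (X i) * Z (X j)" if "i < n" "j < n" for i j X
    using that by (simp add: f_def prod.distrib prod.delta)
  have intf: "integrable \<mu> (f i j k)" for i j k
    unfolding f_def using iZ iZ2 by (cases "k = i"; cases "k = j") (auto simp: power2_eq_square)
  have sq: "(\<Sum>i<n. Z (X i))\<^sup>2 = (\<Sum>i<n. \<Sum>j<n. \<Prod>k\<in>{..<n}. f i j k (X k))" for X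
    by (simp add: power2_eq_square sum_product prodf)
  have iF: "integrable (PiM {..<n} (\<lambda>_. \<mu>)) (\<lambda>X. (\<Sum>i<n. Z (X i))\<^sup>2)"
  proof -
    have "integrable (PiM {..<n} (\<lambda>_. \<mu>)) (\<lambda>X. \<Prod>k\<in>{..<n}. f i j k (X k))" for i j
      using PP.product_integrable_prod[of "{..<n}" "f i j"] intf by simp
    then show ?thesis unfolding sq by (intro Bochner_Integration.integrable_sum) auto
  qed
  have intf2: "(\<integral>t. f i j k t \<partial>\<mu>) = (if k = i \<and> k = j then (\<integral>t. (Z t)\<^sup>2 \<partial>\<mu>) else if k = i \<or> k = j then 0 else 1)" for i j k
    unfolding f_def using intZ by (auto simp: power2_eq_square prob_space)
  have pint: "(\<Prod>k\<in>{..<n}. (\<integral>t. f i j k t \<partial>\<mu>)) = (if i = j then (\<integral>t. (Z t)\<^sup>2 \<partial>\<mu>) else 0)" if "i < n" "j < n" for i j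
  proof (cases "i = j")
    case True then show ?thesis using that by (simp add: intf2 prod.delta cong: if_cong)
  next
    case False
    have "(\<integral>t. f i j i t \<partial>\<mu>) = 0" using False intf2 by simp
    then have "(\<Prod>k\<in>{..<n}. (\<integral>t. f i j k t \<partial>\<mu>)) = 0"
      using that by (intro prod_zero) auto
    then show ?thesis using False by simp
  qed
  have intF: "(\<integral>X. (\<Sum>i<n. Z (X i))\<^sup>2 \<partial>PiM {..<n} (\<lambda>_. \<mu>)) = real n * (\<integral>t. (Z t)\<^sup>2 \<partial>\<mu>)"
  proof -
    have "integrable (PiM {..<n} (\<lambda>_. \<mu>)) (\<lambda>X. \<Prod>k\<in>{..<n}. f i j k (X k))" for i j
      using PP.product_integrable_prod[of "{..<n}" "f i j"] intf by simp
    moreover have "(\<integral>X. (\<Prod>k\<in>{..<n}. f i j k (X k)) \<partial>PiM {..<n} (\<lambda>_. \<mu>)) = (\<Prod>k\<in>{..<n}. (\<integral>t. f i j k t \<partial>\<mu>))" for i j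
      using PP.product_integral_prod[of "{..<n}" "f i j"] intf by simp
    ultimately show ?thesis unfolding sq
      by (simp add: Bochner_Integration.integral_sum pint)
  qed
  have eq: "((\<Sum>i<n. Y (X i)) / real n - b)\<^sup>2 = (\<Sum>i<n. Z (X i))\<^sup>2 / (real n)\<^sup>2" for X
    using n by (simp add: Z_def sum_subtractf field_simps)
  have "(\<integral>\<^sup>+X. ennreal (((\<Sum>i<n. Y (X i)) / real n - b)\<^sup>2) \<partial>PiM {..<n} (\<lambda>_. \<mu>))
      = ennreal ((\<integral>X. (\<Sum>i<n. Z (X i))\<^sup>2 \<partial>PiM {..<n} (\<lambda>_. \<mu>)) / (real n)\<^sup>2)"
    unfolding eq
    by (subst nn_integral_eq_integral) (use iF in auto)
  also have "\<dots> = ennreal ((\<integral>t. (Z t)\<^sup>2 \<partial>\<mu>) / real n)"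
    using n by (simp only: intF) (simp add: power2_eq_square)
  also have "\<dots> \<le> ennreal ((\<integral>t. (Y t)\<^sup>2 \<partial>\<mu>) / real n)"
    using n by (intro ennreal_leI divide_right_mono) (auto simp: intZ2)
  also have "\<dots> = ennreal (1 / real n) * ennreal (\<integral>t. (Y t)\<^sup>2 \<partial>\<mu>)"
    using n by (simp add: ennreal_mult'[symmetric])
  also have "ennreal (\<integral>t. (Y t)\<^sup>2 \<partial>\<mu>) = (\<integral>\<^sup>+t. ennreal ((Y t)\<^sup>2) \<partial>\<mu>)"
    by (subst nn_integral_eq_integral) (use iY2 in auto)
  finally show ?thesis unfolding b_def .
qed


context
  fixes s K :: "real \<Rightarrow> real" and w :: real and n :: nat
  assumes s: "is_density s" and K: "is_density K" and w: "0 < w" and n: "1 \<le> n"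
begin

lemma sm[measurable]: "s \<in> borel_measurable borel" using s unfolding is_density_def by auto
lemma Km[measurable]: "K \<in> borel_measurable borel" using K unfolding is_density_def by auto
lemma s0: "0 \<le> s x" using s unfolding is_density_def by auto
lemma K0: "0 \<le> K x" using K unfolding is_density_def by auto

definition "\<mu> = density lborel (\<lambda>x. ennreal (s x))"

lemma prob_mu: "prob_space \<mu>"
  unfolding \<mu>_def using s by (intro prob_spaceI) (auto simp: is_density_def emeasure_density)

lemma sets_mu[measurable_cong]: "sets \<mu> = sets borel" unfolding \<mu>_def by simp

lemma sample_eq: "sample n s = PiM {..<n} (\<lambda>_. \<mu>)" unfolding sample_def \<mu>_def ..

lemma conv_meas[measurable]: "(\<lambda>x. conv f g x) \<in> borel_measurable borel"
  if [measurable]: "f \<in> borel_measurable borel" "g \<in> borel_measurable borel" for f g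
  unfolding conv_def by measurable

lemma G_meas: "(\<lambda>(X, x). ennreal ((sqrt (emp_conv K w n X x)
        - sqrt (enn2real (conv (scaled K w) s x)))\<^sup>2)) \<in> borel_measurable (sample n s \<Otimes>\<^sub>M lborel)"
  unfolding sample_eq emp_conv_def scaled_def by measurable

definition "Yf x t = scaled K w (x - t)"
lemma Y0: "0 \<le> Yf x t" unfolding Yf_def scaled_def using K0 w by simp
lemma Ym[measurable]: "Yf x \<in> borel_measurable borel" unfolding Yf_def scaled_def by measurable

lemma nn_mu: "(\<integral>\<^sup>+t. f t \<partial>\<mu>) = (\<integral>\<^sup>+t. ennreal (s t) * f t \<partial>lborel)"
  if [measurable]: "f \<in> borel_measurable borel" for f
  unfolding \<mu>_def by (subst nn_integral_density) auto

lemma F1: "conv (scaled K w) s x = (\<integral>\<^sup>+t. ennreal (Yf x t) \<partial>\<mu>)"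
proof -
  have "(\<integral>\<^sup>+t. ennreal (Yf x t) \<partial>\<mu>) = (\<integral>\<^sup>+ t. ennreal (s t) * ennreal (Yf x t) \<partial>lborel)"
    by (rule nn_mu) measurable
  then show ?thesis unfolding conv_def
    by (simp add: Yf_def ennreal_mult[symmetric] s0 Y0[unfolded Yf_def] mult.commute)
qed

lemma F2: "conv (scaled (\<lambda>y. (K y)\<^sup>2) w) s x = ennreal w * (\<integral>\<^sup>+t. ennreal ((Yf x t)\<^sup>2) \<partial>\<mu>)"
proof -
  have "conv (scaled (\<lambda>y. (K y)\<^sup>2) w) s x = (\<integral>\<^sup>+t. ennreal w * (ennreal (s t) * ennreal ((Yf x t)\<^sup>2)) \<partial>lborel)"
    unfolding conv_def
    by (intro nn_integral_cong) (use w s0 in \<open>auto simp: Yf_def scaled_def ennreal_mult[symmetric] power2_eq_square\<close>)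
  also have "\<dots> = ennreal w * (\<integral>\<^sup>+t. ennreal (s t) * ennreal ((Yf x t)\<^sup>2) \<partial>lborel)"
    by (rule nn_integral_cmult) measurable
  also have "(\<integral>\<^sup>+t. ennreal (s t) * ennreal ((Yf x t)\<^sup>2) \<partial>lborel) = (\<integral>\<^sup>+t. ennreal ((Yf x t)\<^sup>2) \<partial>\<mu>)"
    by (rule nn_mu[symmetric]) measurable
  finally show ?thesis .
qed

lemma comp_int: "(\<integral>\<^sup>+X. f (X i) \<partial>PiM {..<n} (\<lambda>_. \<mu>)) = (\<integral>\<^sup>+t. f t \<partial>\<mu>)"
  if [measurable]: "f \<in> borel_measurable borel" and i: "i < n" for f i
proof -
  have "(\<integral>\<^sup>+t. f t \<partial>\<mu>) = (\<integral>\<^sup>+t. f t \<partial>distr (PiM {..<n} (\<lambda>_. \<mu>)) \<mu> (\<lambda>X. X i))"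
    using distr_PiM_component[of "{..<n}" "\<lambda>_. \<mu>" i] prob_mu i by simp
  also have "\<dots> = (\<integral>\<^sup>+X. f (X i) \<partial>PiM {..<n} (\<lambda>_. \<mu>))"
    using i by (subst nn_integral_distr) auto
  finally show ?thesis ..
qed

lemma emp_eq: "emp_conv K w n X x = (\<Sum>i<n. Yf x (X i)) / real n"
  unfolding emp_conv_def Yf_def ..

lemma F3: "(\<integral>\<^sup>+X. ennreal (emp_conv K w n X x) \<partial>sample n s) = conv (scaled K w) s x"
proof -
  have "(\<integral>\<^sup>+X. ennreal (emp_conv K w n X x) \<partial>sample n s)
      = (\<integral>\<^sup>+X. ennreal (1 / real n) * (\<Sum>i<n. ennreal (Yf x (X i))) \<partial>PiM {..<n} (\<lambda>_. \<mu>))"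
    unfolding sample_eq emp_eq
    by (intro nn_integral_cong) (simp add: Y0 sum_nonneg ennreal_mult[symmetric] sum_ennreal)
  also have "\<dots> = ennreal (1 / real n) * (\<Sum>i<n. (\<integral>\<^sup>+X. ennreal (Yf x (X i)) \<partial>PiM {..<n} (\<lambda>_. \<mu>)))"
  proof -
    have "(\<integral>\<^sup>+X. ennreal (1 / real n) * (\<Sum>i<n. ennreal (Yf x (X i))) \<partial>PiM {..<n} (\<lambda>_. \<mu>))
      = ennreal (1 / real n) * (\<integral>\<^sup>+X. (\<Sum>i<n. ennreal (Yf x (X i))) \<partial>PiM {..<n} (\<lambda>_. \<mu>))"
      by (rule nn_integral_cmult) measurable
    also have "(\<integral>\<^sup>+X. (\<Sum>i<n. ennreal (Yf x (X i))) \<partial>PiM {..<n} (\<lambda>_. \<mu>)) = (\<Sum>i<n. (\<integral>\<^sup>+X. ennreal (Yf x (X i)) \<partial>PiM {..<n} (\<lambda>_. \<mu>)))"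
      by (rule nn_integral_sum) measurable
    finally show ?thesis .
  qed
  also have "\<dots> = ennreal (1 / real n) * (real n * (\<integral>\<^sup>+t. ennreal (Yf x t) \<partial>\<mu>))"
  proof -
    have "(\<Sum>i<n. (\<integral>\<^sup>+X. ennreal (Yf x (X i)) \<partial>PiM {..<n} (\<lambda>_. \<mu>))) = (\<Sum>i<n. (\<integral>\<^sup>+t. ennreal (Yf x t) \<partial>\<mu>))"
      by (intro sum.cong refl comp_int) auto
    then show ?thesis by (simp add: ennreal_of_nat_eq_real_of_nat)
  qed
  also have "\<dots> = (\<integral>\<^sup>+t. ennreal (Yf x t) \<partial>\<mu>)"
    using n by (simp add: mult.assoc[symmetric] ennreal_of_nat_eq_real_of_nat ennreal_mult[symmetric])
  finally show ?thesis using F1 by simp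
qed

lemma F4: "AE x in lborel. conv (scaled K w) s x \<noteq> \<infinity>"
proof (rule nn_integral_noteq_infinite)
  show "(\<lambda>x. conv (scaled K w) s x) \<in> borel_measurable lborel" unfolding scaled_def by measurable
  have inner: "(\<integral>\<^sup>+x. ennreal (scaled K w (x - y)) \<partial>lborel) = 1" for y
  proof -
    have "(\<integral>\<^sup>+x. ennreal (scaled K w (x - y)) \<partial>lborel) = ennreal \<bar>w\<bar> * (\<integral>\<^sup>+u. ennreal (scaled K w ((y + w * u) - y)) \<partial>lborel)"
      using w by (intro nn_integral_real_affine) (auto simp: scaled_def)
    also have "\<dots> = ennreal w * (\<integral>\<^sup>+u. ennreal (1 / w) * ennreal (K u) \<partial>lborel)"
      using w K0 by (auto simp: scaled_def ennreal_mult[symmetric] intro!: nn_integral_cong arg_cong2[where f="(*)"])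
    also have "\<dots> = ennreal w * (ennreal (1 / w) * 1)"
      using K by (subst nn_integral_cmult) (auto simp: is_density_def)
    also have "\<dots> = 1" using w by (simp add: mult.assoc[symmetric] ennreal_mult[symmetric])
    finally show ?thesis .
  qed
  have "(\<integral>\<^sup>+x. conv (scaled K w) s x \<partial>lborel) = (\<integral>\<^sup>+x. \<integral>\<^sup>+y. ennreal (s y) * ennreal (scaled K w (x - y)) \<partial>lborel \<partial>lborel)"
    unfolding conv_def using w s0 K0
    by (intro nn_integral_cong) (auto simp: scaled_def ennreal_mult[symmetric] mult.commute)
  also have "\<dots> = (\<integral>\<^sup>+y. \<integral>\<^sup>+x. ennreal (s y) * ennreal (scaled K w (x - y)) \<partial>lborel \<partial>lborel)"
    by (rule lborel_pair.Fubini') (unfold scaled_def, measurable)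
  also have "\<dots> = (\<integral>\<^sup>+y. ennreal (s y) \<partial>lborel)"
    by (intro nn_integral_cong) (subst nn_integral_cmult, unfold scaled_def, measurable, simp add: inner[unfolded scaled_def])
  also have "\<dots> = 1" using s by (simp add: is_density_def)
  finally show "(\<integral>\<^sup>+x. conv (scaled K w) s x \<partial>lborel) \<noteq> \<infinity>" by simp
qed

lemma perx:
  assumes fin: "conv (scaled K w) s x \<noteq> \<infinity>"
  shows "(\<integral>\<^sup>+X. ennreal ((sqrt (emp_conv K w n X x) - sqrt (enn2real (conv (scaled K w) s x)))\<^sup>2) \<partial>sample n s)
    \<le> ennreal (1 / (real n * w)) * (indicator (A_set s K w) x *
            (conv (scaled (\<lambda>y. (K y)\<^sup>2) w) s x / conv (scaled K w) s x))"
proof -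
  define b where "b = enn2real (conv (scaled K w) s x)"
  have cb: "conv (scaled K w) s x = ennreal b" using fin unfolding b_def by (simp add: less_top)
  have b0: "0 \<le> b" by (simp add: b_def)
  have emp0: "0 \<le> emp_conv K w n X x" for X unfolding emp_eq using Y0 by (simp add: sum_nonneg)
  show ?thesis
  proof (cases "b = 0")
    case True
    have "(\<integral>\<^sup>+X. ennreal ((sqrt (emp_conv K w n X x) - sqrt (enn2real (conv (scaled K w) s x)))\<^sup>2) \<partial>sample n s)
        = (\<integral>\<^sup>+X. ennreal (emp_conv K w n X x) \<partial>sample n s)"
      using True by (intro nn_integral_cong) (simp add: emp0 b_def[symmetric])
    also have "\<dots> = 0" using F3 cb True by simp
    finally show ?thesis by simp
  next
    case False
    then have bpos: "0 < b" using b0 by simp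
    have inA: "indicator (A_set s K w) x = (1::ennreal)" unfolding A_set_def using cb bpos by simp
    define I2 where "I2 = (\<integral>\<^sup>+t. ennreal ((Yf x t)\<^sup>2) \<partial>\<mu>)"
    have rhs: "ennreal (1 / (real n * w)) * (indicator (A_set s K w) x *
            (conv (scaled (\<lambda>y. (K y)\<^sup>2) w) s x / conv (scaled K w) s x))
        = ennreal (1 / (real n * w)) * ennreal w * I2 * ennreal (1 / b)"
      unfolding inA F2 cb I2_def using bpos
      by (simp add: divide_ennreal_def inverse_ennreal mult.assoc inverse_eq_divide)
    have nw: "ennreal (1 / (real n * w)) * ennreal w = ennreal (1 / real n)"
      using w n by (simp add: ennreal_mult[symmetric])
    show ?thesis
    proof (cases "I2 = \<infinity>")
      case True
      have "ennreal (1 / (real n * w)) * ennreal w * I2 * ennreal (1 / b) = \<infinity>"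
        unfolding nw True using n bpos by (simp add: ennreal_mult_eq_top_iff)
      then show ?thesis unfolding rhs by simp
    next
      case False
      have intY: "b = (\<integral>t. Yf x t \<partial>\<mu>)"
      proof -
        have Yn: "(\<integral>\<^sup>+t. ennreal (Yf x t) \<partial>\<mu>) = ennreal b" using F1 cb by simp
        have "integrable \<mu> (Yf x)"
          by (rule integrableI_nonneg) (use Y0 Yn in auto)
        then have "(\<integral>\<^sup>+t. ennreal (Yf x t) \<partial>\<mu>) = ennreal (\<integral>t. Yf x t \<partial>\<mu>)"
          by (intro nn_integral_eq_integral) (auto simp: Y0)
        then show ?thesis using Yn b0 by (simp add: integral_nonneg_AE Y0)
      qed
      have vb: "(\<integral>\<^sup>+X. ennreal (((\<Sum>i<n. Yf x (X i)) / real n - b)\<^sup>2) \<partial>PiM {..<n} (\<lambda>_. \<mu>))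
          \<le> ennreal (1 / real n) * I2"
        unfolding intY I2_def using False
        by (intro var_bound prob_mu n) (auto simp: I2_def less_top)
      have "(\<integral>\<^sup>+X. ennreal ((sqrt (emp_conv K w n X x) - sqrt (enn2real (conv (scaled K w) s x)))\<^sup>2) \<partial>sample n s)
          \<le> (\<integral>\<^sup>+X. ennreal (((\<Sum>i<n. Yf x (X i)) / real n - b)\<^sup>2) * ennreal (1 / b) \<partial>PiM {..<n} (\<lambda>_. \<mu>))"
        unfolding sample_eq b_def[symmetric]
      proof (intro nn_integral_mono)
        fix X
        have "(sqrt (emp_conv K w n X x) - sqrt b)\<^sup>2 \<le> (emp_conv K w n X x - b)\<^sup>2 / b"
          by (rule sqrt_diff_sq_le[OF emp0 bpos])
        then show "ennreal ((sqrt (emp_conv K w n X x) - sqrt b)\<^sup>2)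
            \<le> ennreal (((\<Sum>i<n. Yf x (X i)) / real n - b)\<^sup>2) * ennreal (1 / b)"
          using bpos by (simp add: emp_eq ennreal_mult[symmetric] ennreal_leI)
      qed
      also have "\<dots> = (\<integral>\<^sup>+X. ennreal (((\<Sum>i<n. Yf x (X i)) / real n - b)\<^sup>2) \<partial>PiM {..<n} (\<lambda>_. \<mu>)) * ennreal (1 / b)"
        by (rule nn_integral_multc) measurable
      also have "\<dots> \<le> ennreal (1 / real n) * I2 * ennreal (1 / b)"
        by (intro mult_right_mono vb) auto
      finally show ?thesis unfolding rhs nw .
    qed
  qed
qed

lemma part1:
  "risk s K w n \<le> ennreal (1 / (real n * w)) *
        (\<integral>\<^sup>+ x. indicator (A_set s K w) x *
            (conv (scaled (\<lambda>y. (K y)\<^sup>2) w) s x / conv (scaled K w) s x) \<partial>lborel)"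
proof -
  have ps: "prob_space (sample n s)" unfolding sample_eq by (intro prob_space_PiM prob_mu)
  interpret SL: pair_sigma_finite "sample n s" lborel
    using pair_sigma_finite.intro[OF prob_space_imp_sigma_finite[OF ps] lborel.sigma_finite_measure_axioms] .
  have "risk s K w n = (\<integral>\<^sup>+ x. \<integral>\<^sup>+ X. ennreal ((sqrt (emp_conv K w n X x)
        - sqrt (enn2real (conv (scaled K w) s x)))\<^sup>2) \<partial>sample n s \<partial>lborel)"
    unfolding risk_def using G_meas by (subst SL.Fubini') auto
  also have "\<dots> \<le> (\<integral>\<^sup>+ x. ennreal (1 / (real n * w)) * (indicator (A_set s K w) x *
            (conv (scaled (\<lambda>y. (K y)\<^sup>2) w) s x / conv (scaled K w) s x)) \<partial>lborel)"
    using F4 by (intro nn_integral_mono_AE) (auto elim!: eventually_mono intro: perx)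
  also have "\<dots> = ennreal (1 / (real n * w)) *
        (\<integral>\<^sup>+ x. indicator (A_set s K w) x *
            (conv (scaled (\<lambda>y. (K y)\<^sup>2) w) s x / conv (scaled K w) s x) \<partial>lborel)"
    by (rule nn_integral_cmult) (unfold A_set_def scaled_def, measurable)
  finally show ?thesis .
qed

lemma ratio_le:
  assumes supp: "\<forall>x. x \<notin> {c - L..c + L} \<longrightarrow> s x = 0"
  shows "indicator (A_set s K w) (c + u) *
            (conv (scaled (\<lambda>y. (K y)\<^sup>2) w) s (c + u) / conv (scaled K w) s (c + u))
     \<le> (SUP z\<in>{-L..L}. ennreal (K ((u - z) / w)))"
proof -
  define S where "S = (SUP z\<in>{-L..L}. ennreal (K ((u - z) / w)))"
  show ?thesis
  proof (cases "(c + u) \<in> A_set s K w \<and> conv (scaled K w) s (c + u) \<noteq> \<infinity>")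
    case False
    then show ?thesis by (auto simp: indicator_def)
  next
    case True
    then have cpos: "conv (scaled K w) s (c + u) \<noteq> 0" unfolding A_set_def by auto
    have "conv (scaled (\<lambda>y. (K y)\<^sup>2) w) s (c + u) \<le> (\<integral>\<^sup>+t. S * ennreal (scaled K w ((c + u) - t) * s t) \<partial>lborel)"
      unfolding conv_def
    proof (intro nn_integral_mono)
      fix t
      show "ennreal (scaled (\<lambda>y. (K y)\<^sup>2) w ((c + u) - t) * s t) \<le> S * ennreal (scaled K w ((c + u) - t) * s t)"
      proof (cases "s t = 0")
        case False
        then have "t \<in> {c - L..c + L}" using supp by auto
        then have "t - c \<in> {-L..L}" by auto
        then have "ennreal (K ((u - (t - c)) / w)) \<le> S" unfolding S_def by (rule SUP_upper)
        moreover have "(u - (t - c)) / w = ((c + u) - t) / w" by simp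
        ultimately have KS: "ennreal (K (((c + u) - t) / w)) \<le> S" by simp
        have "ennreal (scaled (\<lambda>y. (K y)\<^sup>2) w ((c + u) - t) * s t) = ennreal (K (((c + u) - t) / w)) * ennreal (scaled K w ((c + u) - t) * s t)"
          using w K0 s0 by (simp add: scaled_def ennreal_mult[symmetric] power2_eq_square)
        also have "\<dots> \<le> S * ennreal (scaled K w ((c + u) - t) * s t)"
          by (intro mult_right_mono KS) auto
        finally show ?thesis .
      qed simp
    qed
    also have "\<dots> = S * conv (scaled K w) s (c + u)"
      unfolding conv_def by (rule nn_integral_cmult) (unfold scaled_def, measurable)
    finally have le: "conv (scaled (\<lambda>y. (K y)\<^sup>2) w) s (c + u) \<le> S * conv (scaled K w) s (c + u)" .
    have "conv (scaled (\<lambda>y. (K y)\<^sup>2) w) s (c + u) / conv (scaled K w) s (c + u) \<le> S * conv (scaled K w) s (c + u) / conv (scaled K w) s (c + u)"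
      unfolding divide_ennreal_def by (intro mult_right_mono le) auto
    also have "\<dots> = S" using True cpos by (simp add: ennreal_mult_divide_eq)
    finally show ?thesis using True by (simp add: S_def)
  qed
qed

lemma part2:
  assumes supp: "\<forall>x. x \<notin> {c - L..c + L} \<longrightarrow> s x = 0"
  shows "risk s K w n \<le> ennreal (1 / (real n * w)) *
          (\<integral>\<^sup>+ x. (SUP z\<in>{-L..L}. ennreal (K ((x - z) / w))) \<partial>lborel)"
proof -
  define R where "R x = indicator (A_set s K w) x *
            (conv (scaled (\<lambda>y. (K y)\<^sup>2) w) s x / conv (scaled K w) s x)" for x
  have Rm[measurable]: "R \<in> borel_measurable borel" unfolding R_def A_set_def scaled_def by measurable
  have "(\<integral>\<^sup>+ x. R x \<partial>lborel) = ennreal \<bar>1\<bar> * (\<integral>\<^sup>+ u. R (c + 1 * u) \<partial>lborel)"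
    by (rule nn_integral_real_affine) auto
  also have "\<dots> \<le> (\<integral>\<^sup>+ u. (SUP z\<in>{-L..L}. ennreal (K ((u - z) / w))) \<partial>lborel)"
    using ratio_le[OF supp] by (auto intro!: nn_integral_mono simp: R_def)
  finally have "(\<integral>\<^sup>+ x. R x \<partial>lborel) \<le> (\<integral>\<^sup>+ u. (SUP z\<in>{-L..L}. ennreal (K ((u - z) / w))) \<partial>lborel)" .
  then show ?thesis using part1 unfolding R_def
    by (meson order_trans mult_left_mono zero_le)
qed

end

declare sm[measurable del] Km[measurable del] Ym[measurable del] sets_mu[measurable_cong del]

theorem lemma3:
  fixes s K :: "real \<Rightarrow> real" and w :: real and n :: nat
  assumes "is_density s" and "is_density K" and "0 < w" and "1 \<le> n"
  shows
    "risk s K w n \<le> ennreal (1 / (real n * w)) *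
        (\<integral>\<^sup>+ x. indicator (A_set s K w) x *
            (conv (scaled (\<lambda>y. (K y)\<^sup>2) w) s x / conv (scaled K w) s x) \<partial>lborel)
   \<and> (\<forall>c L. (\<forall>x. x \<notin> {c - L..c + L} \<longrightarrow> s x = 0) \<longrightarrow>
        risk s K w n \<le> ennreal (1 / (real n * w)) *
          (\<integral>\<^sup>+ x. (SUP z\<in>{-L..L}. ennreal (K ((x - z) / w))) \<partial>lborel))
   \<and> (\<forall>L M1 M2. 0 \<le> L \<and> M1 \<le> M2 \<and> bdd_above (range K)
        \<and> mono_on {..<M1} K \<and> monotone_on {M2<..} (\<le>) (\<ge>) K \<longrightarrow>
        (\<integral>\<^sup>+ x. (SUP z\<in>{-L..L}. ennreal (K ((x - z) / w))) \<partial>lborel)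
          \<le> ennreal (2 * L * supnorm K + w * ((M2 - M1) * supnorm K))
             + ennreal w * ((\<integral>\<^sup>+ x. indicator {..M1} x * ennreal (K x) \<partial>lborel)
                          + (\<integral>\<^sup>+ x. indicator {M2..} x * ennreal (K x) \<partial>lborel)))
   \<and> (\<forall>c L. (\<forall>x. x \<notin> {c - L..c + L} \<longrightarrow> s x = 0) \<and> bdd_above (range K)
        \<and> (\<exists>M. mono_on {..<M} K \<and> monotone_on {M<..} (\<le>) (\<ge>) K) \<longrightarrow>
        risk s K w n \<le> ennreal (2 * L * supnorm K / (real n * w) + 1 / real n))"
proof -
  note A = assms
  have Km[measurable]: "K \<in> borel_measurable borel" and K0: "\<And>x. 0 \<le> K x"
    and Kint: "(\<integral>\<^sup>+ x. ennreal (K x) \<partial>lborel) = 1"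
    using A(2) unfolding is_density_def by auto
  have sint: "(\<integral>\<^sup>+ x. ennreal (s x) \<partial>lborel) = 1" using A(1) unfolding is_density_def by auto
  have w: "0 < w" and n: "1 \<le> n" using A by auto
  have Q1: "risk s K w n \<le> ennreal (1 / (real n * w)) *
        (\<integral>\<^sup>+ x. indicator (A_set s K w) x *
            (conv (scaled (\<lambda>y. (K y)\<^sup>2) w) s x / conv (scaled K w) s x) \<partial>lborel)"
    by (rule part1[OF A])
  have Q2: "\<forall>c L. (\<forall>x. x \<notin> {c - L..c + L} \<longrightarrow> s x = 0) \<longrightarrow>
        risk s K w n \<le> ennreal (1 / (real n * w)) *
          (\<integral>\<^sup>+ x. (SUP z\<in>{-L..L}. ennreal (K ((x - z) / w))) \<partial>lborel)"
    by (intro allI impI, erule part2[OF A])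
  have Q3: "\<forall>L M1 M2. 0 \<le> L \<and> M1 \<le> M2 \<and> bdd_above (range K)
        \<and> mono_on {..<M1} K \<and> monotone_on {M2<..} (\<le>) (\<ge>) K \<longrightarrow>
        (\<integral>\<^sup>+ x. (SUP z\<in>{-L..L}. ennreal (K ((x - z) / w))) \<partial>lborel)
          \<le> ennreal (2 * L * supnorm K + w * ((M2 - M1) * supnorm K))
             + ennreal w * ((\<integral>\<^sup>+ x. indicator {..M1} x * ennreal (K x) \<partial>lborel)
                          + (\<integral>\<^sup>+ x. indicator {M2..} x * ennreal (K x) \<partial>lborel))"
  proof (intro allI impI)
    fix L M1 M2 :: real assume H: "0 \<le> L \<and> M1 \<le> M2 \<and> bdd_above (range K)
        \<and> mono_on {..<M1} K \<and> monotone_on {M2<..} (\<le>) (\<ge>) K"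
    show "(\<integral>\<^sup>+ x. (SUP z\<in>{-L..L}. ennreal (K ((x - z) / w))) \<partial>lborel)
          \<le> ennreal (2 * L * supnorm K + w * ((M2 - M1) * supnorm K))
             + ennreal w * ((\<integral>\<^sup>+ x. indicator {..M1} x * ennreal (K x) \<partial>lborel)
                          + (\<integral>\<^sup>+ x. indicator {M2..} x * ennreal (K x) \<partial>lborel))"
      using H by (intro part3[OF Km K0 w]) auto
  qed
  have Q4: "\<forall>c L. (\<forall>x. x \<notin> {c - L..c + L} \<longrightarrow> s x = 0) \<and> bdd_above (range K)
        \<and> (\<exists>M. mono_on {..<M} K \<and> monotone_on {M<..} (\<le>) (\<ge>) K) \<longrightarrow>
        risk s K w n \<le> ennreal (2 * L * supnorm K / (real n * w) + 1 / real n)"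
  proof (intro allI impI)
    fix c L assume H: "(\<forall>x. x \<notin> {c - L..c + L} \<longrightarrow> s x = 0) \<and> bdd_above (range K)
        \<and> (\<exists>M. mono_on {..<M} K \<and> monotone_on {M<..} (\<le>) (\<ge>) K)"
    then obtain M where M: "mono_on {..<M} K" "monotone_on {M<..} (\<le>) (\<ge>) K" by blast
    have L0: "0 \<le> L"
    proof (rule ccontr)
      assume "\<not> 0 \<le> L"
      then have "\<forall>x. s x = 0" using H by auto
      then show False using sint by simp
    qed
    define B where "B = supnorm K"
    have B0: "0 \<le> B" unfolding B_def using K_le_supnorm[of K 0] H K0 by (meson order_trans)
    have I12: "(\<integral>\<^sup>+ x. indicator {..M} x * ennreal (K x) \<partial>lborel)
                          + (\<integral>\<^sup>+ x. indicator {M..} x * ennreal (K x) \<partial>lborel) = 1"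
    proof -
      have "(\<integral>\<^sup>+ x. indicator {..M} x * ennreal (K x) \<partial>lborel)
                          + (\<integral>\<^sup>+ x. indicator {M..} x * ennreal (K x) \<partial>lborel)
          = (\<integral>\<^sup>+ x. indicator {..M} x * ennreal (K x) + indicator {M..} x * ennreal (K x) \<partial>lborel)"
        by (rule nn_integral_add[symmetric]) auto
      also have "\<dots> = (\<integral>\<^sup>+ x. ennreal (K x) \<partial>lborel)"
        using AE_lborel_singleton[of M]
        by (intro nn_integral_cong_AE) (auto elim!: eventually_mono simp: indicator_def)
      finally show ?thesis using Kint by simp
    qed
    have "(\<integral>\<^sup>+ x. (SUP z\<in>{-L..L}. ennreal (K ((x - z) / w))) \<partial>lborel)
          \<le> ennreal (2 * L * B + w * ((M - M) * B)) + ennreal w * 1"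
      unfolding B_def I12[symmetric] using H M by (intro part3[OF Km K0 w L0 order_refl]) auto
    then have S: "(\<integral>\<^sup>+ x. (SUP z\<in>{-L..L}. ennreal (K ((x - z) / w))) \<partial>lborel)
          \<le> ennreal (2 * L * B) + ennreal w" by simp
    have "risk s K w n \<le> ennreal (1 / (real n * w)) * (ennreal (2 * L * B) + ennreal w)"
      using H by (intro order_trans[OF part2[OF A, of c L] mult_left_mono[OF S]]) auto
    also have "\<dots> = ennreal (2 * L * B / (real n * w) + 1 / real n)"
    proof -
      have e1: "ennreal (1 / (real n * w)) * ennreal (2 * L * B) = ennreal (2 * L * B / (real n * w))"
        using w n L0 B0 by (subst ennreal_mult[symmetric]) auto
      have e2: "ennreal (1 / (real n * w)) * ennreal w = ennreal (1 / real n)"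
        using w n by (subst ennreal_mult[symmetric]) auto
      have e3: "ennreal (2 * L * B / (real n * w)) + ennreal (1 / real n) = ennreal (2 * L * B / (real n * w) + 1 / real n)"
        using w n L0 B0 by (intro ennreal_plus[symmetric]) auto
      show ?thesis unfolding distrib_left e1 e2 e3 ..
    qed
    finally show "risk s K w n \<le> ennreal (2 * L * supnorm K / (real n * w) + 1 / real n)"
      unfolding B_def .
  qed
  show ?thesis by (intro conjI Q1 Q2 Q3 Q4)
qed

end
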